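(* On $M=(0,\infty)$ with $g_R=dx^2$, let $I_k=[2^{-(k+1)},2^{-k}]$ for $k=0,1,2,\dots$ and let $f:(0,\infty)\to\mathbb R$ be any smooth function with $|f|<1$ everywhere such that $f\equiv 2^{-(4k+1)}-1$ on $I_{4k}$ and $f\equiv 1-2^{-(4k+3)}$ on $I_{4k+2}$ for all $k\ge0$. Then the Randers metric $R$ with Zermelo data $(dx^2,\,f\partial_x)$ is forward and backward geodesically complete, although $g_R$ is incomplete.
   Context: The Randers metric with Zermelo data $(g_R,W)$, $|W|_R<1$, is the Finsler metric $R(v)=\dfrac{|v|_R^2}{g_R(W,v)+\sqrt{(1-|W|_R^2)|v|_R^2+g_R(W,v)^2}}$, whose unit sphere at $p$ is the translate by $W_p$ of the $g_R$-unit sphere. Forward (resp. backward) completeness means every inextendible geodesic is defined on an interval unbounded above (resp. below). *)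

theory Defs
  imports "HOL-Analysis.Analysis"
begin

definition smooth_on_real :: "real set \<Rightarrow> (real \<Rightarrow> real) \<Rightarrow> bool" where
  "smooth_on_real S f \<longleftrightarrow> (\<forall>n. \<forall>x\<in>S. ((deriv ^^ n) f) differentiable (at x))"

text \<open>Manifold M = (0,infinity) with g_R = dx^2; a tangent vector at x is a real v
  (v times d/dx), so |v|_R^2 = v^2 and g_R(W,v) = W x * v for W = W x d/dx.
  Randers metric with Zermelo data (dx^2, W):\<close>
definition randers :: "(real \<Rightarrow> real) \<Rightarrow> real \<Rightarrow> real \<Rightarrow> real" where
  "randers W x v = v^2 / (W x * v + sqrt ((1 - (W x)^2) * v^2 + (W x * v)^2))"

definition energy :: "(real \<Rightarrow> real) \<Rightarrow> real \<Rightarrow> real \<Rightarrow> real" where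
  "energy W x v = (randers W x v)^2 / 2"

definition open_interval :: "real set \<Rightarrow> bool" where
  "open_interval J \<longleftrightarrow> is_interval J \<and> open J \<and> J \<noteq> {}"

definition randers_geodesic :: "(real \<Rightarrow> real) \<Rightarrow> real set \<Rightarrow> (real \<Rightarrow> real) \<Rightarrow> bool" where
  "randers_geodesic W J \<gamma> \<longleftrightarrow> open_interval J \<and> (\<forall>t\<in>J. \<gamma> t > 0) \<and>
     ((\<exists>c. \<forall>t\<in>J. \<gamma> t = c) \<or>
      (\<forall>t\<in>J. \<gamma> differentiable (at t) \<and> deriv \<gamma> t \<noteq> 0 \<and>
         (\<lambda>w. energy W (\<gamma> t) w) differentiable (at (deriv \<gamma> t)) \<and>
         (\<lambda>y. energy W y (deriv \<gamma> t)) differentiable (at (\<gamma> t)) \<and>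
         ((\<lambda>s. deriv (\<lambda>w. energy W (\<gamma> s) w) (deriv \<gamma> s))
            has_real_derivative deriv (\<lambda>y. energy W y (deriv \<gamma> t)) (\<gamma> t)) (at t)))"

definition inextendible_geodesic :: "(real \<Rightarrow> real) \<Rightarrow> real set \<Rightarrow> (real \<Rightarrow> real) \<Rightarrow> bool" where
  "inextendible_geodesic W J \<gamma> \<longleftrightarrow> randers_geodesic W J \<gamma> \<and>
     \<not> (\<exists>J' \<delta>. J \<subset> J' \<and> randers_geodesic W J' \<delta> \<and> (\<forall>t\<in>J. \<delta> t = \<gamma> t))"

definition forward_complete :: "(real \<Rightarrow> real) \<Rightarrow> bool" where
  "forward_complete W \<longleftrightarrow>
     (\<forall>J \<gamma>. inextendible_geodesic W J \<gamma> \<longrightarrow> (\<forall>a. \<exists>t\<in>J. t > a))"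

definition backward_complete :: "(real \<Rightarrow> real) \<Rightarrow> bool" where
  "backward_complete W \<longleftrightarrow>
     (\<forall>J \<gamma>. inextendible_geodesic W J \<gamma> \<longrightarrow> (\<forall>a. \<exists>t\<in>J. t < a))"

end

theory Submission
  imports Defs
begin

lemma randers_form:
  assumes "v \<noteq> 0"
  shows "randers W y v = \<bar>v\<bar> / (1 + sgn v * W y)"
proof -
  have s: "sqrt ((1 - (W y)^2) * v^2 + (W y * v)^2) = \<bar>v\<bar>"
    by (simp add: algebra_simps power_mult_distrib)
  show ?thesis
  proof (cases "v > 0")
    case True
    have "W y * v + v = v * (1 + W y)" by (simp add: algebra_simps)
    then have "v^2 / (W y * v + v) = v / (1 + W y)"
      using True by (simp add: power2_eq_square)
    then show ?thesis unfolding randers_def s using True by simp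
  next
    case False
    with assms have v: "v < 0" by auto
    have "W y * v - v = (-v) * (1 - W y)" by (simp add: algebra_simps)
    then have "v^2 / (W y * v - v) = -v / (1 - W y)"
      using v by (simp add: power2_eq_square)
    then show ?thesis unfolding randers_def s using v by simp
  qed
qed

lemma energy_form:
  assumes "v \<noteq> 0"
  shows "energy W y v = v^2 / (2*(1 + sgn v * W y)^2)"
  unfolding energy_def randers_form[OF assms] by (simp add: power_divide)

lemma energy_dv:
  assumes "v \<noteq> 0"
  shows "((\<lambda>w. energy W x w) has_real_derivative v/(1 + sgn v * W x)^2) (at v)"
proof -
  define C where "C = 2*(1 + sgn v * W x)^2"
  have ev: "eventually (\<lambda>w. sgn w = sgn v) (nhds v)"
  proof (cases "v > 0")
    case True
    have "eventually (\<lambda>w. w \<in> {0<..}) (nhds v)" using True by (intro eventually_nhds_in_open) auto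
    then show ?thesis by eventually_elim (use True in auto)
  next
    case False
    then have "v < 0" using assms by auto
    have "eventually (\<lambda>w. w \<in> {..<0}) (nhds v)" using \<open>v<0\<close> by (intro eventually_nhds_in_open) auto
    then show ?thesis by eventually_elim (use \<open>v<0\<close> in auto)
  qed
  have ev2: "eventually (\<lambda>w. energy W x w = w^2 / C) (nhds v)"
  proof -
    have "eventually (\<lambda>w. sgn w = sgn v \<and> w \<noteq> 0) (nhds v)"
      using ev by eventually_elim (use assms in \<open>auto simp: sgn_0_0\<close>)
    then show ?thesis by eventually_elim (simp add: energy_form C_def)
  qed
  have d: "((\<lambda>w. w^2 / C) has_real_derivative (real 2 * (1 * v ^ (2 - Suc 0))) / C) (at v)"
    by (rule DERIV_cdivide[OF DERIV_power[OF DERIV_ident]])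
  have eq: "(real 2 * (1 * v ^ (2 - Suc 0))) / C = v/(1 + sgn v * W x)^2"
    unfolding C_def by simp
  show ?thesis using d DERIV_cong_ev[OF refl ev2 refl] eq by simp
qed

lemma energy_dx:
  assumes "v \<noteq> 0" and fd: "(W has_real_derivative Wd) (at y)" and a: "1 + sgn v * W y \<noteq> 0"
  shows "((\<lambda>y. energy W y v) has_real_derivative (-(v^2) * sgn v * Wd / (1 + sgn v * W y)^3)) (at y)"
proof -
  have e: "(\<lambda>y. energy W y v) = (\<lambda>y. v^2 / (2*(1 + sgn v * W y)^2))"
    using energy_form[OF assms(1)] by auto
  have h: "((\<lambda>y. 1 + sgn v * W y) has_real_derivative sgn v * Wd) (at y)"
    using DERIV_add[OF DERIV_const DERIV_cmult[OF fd, of "sgn v"], of 1] by simp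
  have h2: "((\<lambda>y. 2*(1 + sgn v * W y)^2) has_real_derivative 2 * (real 2 * (sgn v * Wd * (1 + sgn v * W y) ^ (2 - Suc 0)))) (at y)"
    by (rule DERIV_cmult[OF DERIV_power[OF h]])
  have d: "((\<lambda>y. v^2 / (2*(1 + sgn v * W y)^2)) has_real_derivative
     (0 * (2*(1 + sgn v * W y)^2) - v^2 * (2 * (real 2 * (sgn v * Wd * (1 + sgn v * W y) ^ (2 - Suc 0))))) / ((2*(1 + sgn v * W y)^2) * (2*(1 + sgn v * W y)^2))) (at y)"
    by (rule DERIV_divide[OF DERIV_const h2]) (use a in simp)
  have alg: "\<And>A::real. A \<noteq> 0 \<Longrightarrow> (0 * (2*A^2) - v^2 * (2 * (real 2 * (sgn v * Wd * A ^ (2 - Suc 0))))) / ((2*A^2) * (2*A^2))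
     = -(v^2) * sgn v * Wd / A^3"
    by (simp add: field_simps power2_eq_square power3_eq_cube)
  have eq: "(0 * (2*(1 + sgn v * W y)^2) - v^2 * (2 * (real 2 * (sgn v * Wd * (1 + sgn v * W y) ^ (2 - Suc 0))))) / ((2*(1 + sgn v * W y)^2) * (2*(1 + sgn v * W y)^2))
     = -(v^2) * sgn v * Wd / (1 + sgn v * W y)^3"
    using alg[OF a] .
  show ?thesis unfolding e using d eq by simp
qed

lemma prim:
  assumes g: "continuous_on {0<..} g"
  shows "\<exists>F. \<forall>x>0. (F has_real_derivative g x) (at x)"
proof -
  define F where "F x = integral {1..x} g - integral {x..1} g" for x
  have "(F has_real_derivative g x) (at x)" if x: "x > 0" for x
  proof -
    define m where "m = min x 1 / 2"
    define M where "M = max x 1 + 1"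
    have m: "0 < m" "m < x" "m < 1" using x by (auto simp: m_def)
    have M: "x < M" "1 < M" by (auto simp: M_def)
    have gc: "continuous_on {m..M} g" using g by (rule continuous_on_subset) (use m in auto)
    have gi: "g integrable_on {m..M}" by (rule integrable_continuous_real[OF gc])
    have Fe: "F y = integral {m..y} g - integral {m..1} g" if y: "y \<in> {m..M}" for y
    proof (cases "y \<ge> 1")
      case True
      have "integral {m..1} g + integral {1..y} g = integral {m..y} g"
        by (rule Henstock_Kurzweil_Integration.integral_combine[where a=m and c=1 and b=y]) (use True m y in \<open>auto intro: integrable_subinterval_real[OF gi]\<close>)
      moreover have "integral {y..1} g = 0"
      proof (cases "y = 1")
        case True then show ?thesis by simp
      next
        case False then have "{y..1} = {}" using \<open>y \<ge> 1\<close> by auto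
        then show ?thesis by simp
      qed
      ultimately show ?thesis unfolding F_def by simp
    next
      case False
      have "integral {m..y} g + integral {y..1} g = integral {m..1} g"
        by (rule Henstock_Kurzweil_Integration.integral_combine[where a=m and c=y and b=1]) (use False m y M in \<open>auto intro: integrable_subinterval_real[OF gi]\<close>)
      moreover have "{1..y} = {}" using False by auto
      ultimately show ?thesis unfolding F_def by simp
    qed
    have d: "((\<lambda>y. integral {m..y} g - integral {m..1} g) has_real_derivative g x) (at x within {m..M})"
      using DERIV_diff[OF integral_has_real_derivative[OF gc, of x] DERIV_const, of "integral {m..1} g"] m M
      by simp
    then have d': "((\<lambda>y. integral {m..y} g - integral {m..1} g) has_real_derivative g x) (at x)"
      using at_within_Icc_at[of m x M] m M by simp
    have ev: "eventually (\<lambda>y. F y = integral {m..y} g - integral {m..1} g) (nhds x)"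
    proof -
      have "eventually (\<lambda>y. y \<in> {m<..<M}) (nhds x)" using m M by (intro eventually_nhds_in_open) auto
      then show ?thesis by eventually_elim (auto intro: Fe)
    qed
    show ?thesis using DERIV_cong_ev[OF refl ev refl] d' by simp
  qed
  then show ?thesis by blast
qed

lemma global_inverse:
  fixes F g :: "real \<Rightarrow> real"
  assumes Fd: "\<And>x. x > 0 \<Longrightarrow> (F has_real_derivative g x) (at x)"
    and gpos: "\<And>x. x > 0 \<Longrightarrow> g x > 1/2"
    and low: "\<And>r. \<exists>x>0. F x < r"
  shows "\<exists>G. (\<forall>t. G t > 0 \<and> F (G t) = t \<and> (G has_real_derivative inverse (g (G t))) (at t))
             \<and> (\<forall>x>0. G (F x) = x)"
proof -
  have mono: "F x < F y" if "0 < x" "x < y" for x y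
  proof (rule DERIV_pos_imp_increasing[OF that(2)])
    fix z assume "x \<le> z" "z \<le> y"
    then have "z > 0" using that by auto
    then show "\<exists>y. (F has_real_derivative y) (at z) \<and> 0 < y"
      using Fd[of z] gpos[of z] by (intro exI[of _ "g z"]) auto
  qed
  have inj: "x = y" if "x > 0" "y > 0" "F x = F y" for x y
    using mono[of x y] mono[of y x] that by (cases x y rule: linorder_cases) auto
  have high: "F 1 + (x - 1)/2 < F x" if "x > 1" for x
  proof -
    have "(\<lambda>x. F x - x/2) 1 < (\<lambda>x. F x - x/2) x"
    proof (rule DERIV_pos_imp_increasing[OF that])
      fix z assume z: "1 \<le> z" "z \<le> x"
      show "\<exists>y. ((\<lambda>x. F x - x/2) has_real_derivative y) (at z) \<and> 0 < y"
        using DERIV_diff[OF Fd[of z] DERIV_cdivide[OF DERIV_ident, of 2]] gpos[of z] z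
        by (intro exI[of _ "g z - 1/2"]) auto
    qed
    then show ?thesis by (simp add: field_simps)
  qed
  have cont: "isCont F x" if "x > 0" for x using Fd[OF that] by (rule DERIV_isCont)
  have surj: "\<exists>x>0. F x = r" for r
  proof -
    obtain a where a: "a > 0" "F a < r" using low by blast
    define b where "b = max 2 (2*(r - F 1) + 2)"
    have "F 1 + (b - 1)/2 < F b" using high[of b] by (auto simp: b_def)
    moreover have "r \<le> F 1 + (b - 1)/2" by (simp add: b_def field_simps)
    ultimately have Fb: "r < F b" by linarith
    have ab: "a \<le> b"
    proof (rule ccontr)
      assume "\<not> a \<le> b"
      moreover have "b > 0" by (simp add: b_def)
      ultimately have "F b < F a" using mono[of b a] by auto
      then show False using a Fb by simp
    qed
    have "continuous_on {a..b} F" using a by (intro continuous_at_imp_continuous_on ballI cont) auto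
    then obtain x where "a \<le> x" "x \<le> b" "F x = r" using IVT'[of F a r b] a Fb ab by auto
    then show ?thesis using a by (intro exI[of _ x]) auto
  qed
  define G where "G t = (SOME x. x > 0 \<and> F x = t)" for t
  have G: "G t > 0 \<and> F (G t) = t" for t unfolding G_def by (rule someI_ex) (use surj in blast)
  have GF: "G (F x) = x" if "x > 0" for x using inj[of "G (F x)" x] G[of "F x"] that by auto
  have Gc: "isCont G t" for t
  proof -
    have "isCont G (F (G t))"
    proof (rule isCont_inverse_function[where f=F and g=G and x="G t" and d="G t / 2"])
      have pos: "0 < z" if "\<bar>z - G t\<bar> \<le> G t / 2" for z using that G[of t] by (simp add: abs_if split: if_splits)
      show "0 < G t / 2" using G[of t] by simp
      show "G (F z) = z" if "\<bar>z - G t\<bar> \<le> G t / 2" for z using GF pos[OF that] by blast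
      show "isCont F z" if "\<bar>z - G t\<bar> \<le> G t / 2" for z using cont pos[OF that] by blast
    qed
    then show ?thesis using G[of t] by simp
  qed
  have Gd: "(G has_real_derivative inverse (g (G t))) (at t)" for t
  proof (rule DERIV_inverse_function[where a="t-1" and b="t+1"])
    show "(F has_real_derivative g (G t)) (at (G t))" using Fd G by blast
    show "g (G t) \<noteq> 0" using gpos[of "G t"] G[of t] by auto
  qed (use G Gc in auto)
  show ?thesis using G Gd GF by blast
qed

lemma ode_geodesic:
  fixes f \<delta> :: "real \<Rightarrow> real"
  assumes fd: "\<And>x. x > 0 \<Longrightarrow> (f has_real_derivative deriv f x) (at x)"
    and bound: "\<And>x. x > 0 \<Longrightarrow> \<bar>f x\<bar> < 1"
    and \<sigma>: "\<sigma> = 1 \<or> \<sigma> = -1" and c: "\<sigma> * c > 0"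
    and J: "open_interval J" and pos: "\<And>t. t \<in> J \<Longrightarrow> \<delta> t > 0"
    and ode: "\<And>t. t \<in> J \<Longrightarrow> (\<delta> has_real_derivative c * (1 + \<sigma> * f (\<delta> t))) (at t)"
  shows "randers_geodesic f J \<delta>"
proof -
  define a where "a s = 1 + \<sigma> * f (\<delta> s)" for s
  have apos: "a s > 0" if "s \<in> J" for s
    using bound[OF pos[OF that]] \<sigma> by (auto simp: a_def abs_less_iff)
  have u: "deriv \<delta> s = c * a s" if "s \<in> J" for s
    using DERIV_imp_deriv[OF ode[OF that]] by (simp add: a_def)
  have sgnc: "sgn c = \<sigma>" using \<sigma> c by (auto simp: sgn_if zero_less_mult_iff)
  have sgnu: "sgn (deriv \<delta> s) = \<sigma>" if "s \<in> J" for s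
    using u[OF that] apos[OF that] sgnc by (simp add: sgn_mult)
  have cne: "c \<noteq> 0" using c by auto
  have une: "deriv \<delta> s \<noteq> 0" if "s \<in> J" for s using u[OF that] apos[OF that] cne by simp
  have P: "deriv (\<lambda>w. energy f (\<delta> s) w) (deriv \<delta> s) = c / a s" if "s \<in> J" for s
  proof -
    have "deriv (\<lambda>w. energy f (\<delta> s) w) (deriv \<delta> s) = deriv \<delta> s / (1 + sgn (deriv \<delta> s) * f (\<delta> s))^2"
      by (rule DERIV_imp_deriv[OF energy_dv[OF une[OF that]]])
    also have "\<dots> = c * a s / (a s)^2" using sgnu[OF that] u[OF that] by (simp add: a_def)
    also have "\<dots> = c / a s" using apos[OF that] by (simp add: power2_eq_square)
    finally show ?thesis .
  qed
  show ?thesis unfolding randers_geodesic_def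
  proof (intro conjI disjI2 ballI J pos)
    fix t assume t: "t \<in> J"
    show "\<delta> differentiable at t" using ode[OF t] real_differentiable_def by blast
    show "deriv \<delta> t \<noteq> 0" by (rule une[OF t])
    show "(\<lambda>w. energy f (\<delta> t) w) differentiable at (deriv \<delta> t)"
      using energy_dv[OF une[OF t]] real_differentiable_def by blast
    have ane: "1 + sgn (deriv \<delta> t) * f (\<delta> t) \<noteq> 0" using apos[OF t] sgnu[OF t] by (simp add: a_def)
    have Qd: "((\<lambda>y. energy f y (deriv \<delta> t)) has_real_derivative
        (-((deriv \<delta> t)^2) * sgn (deriv \<delta> t) * deriv f (\<delta> t) / (1 + sgn (deriv \<delta> t) * f (\<delta> t))^3)) (at (\<delta> t))"
      by (rule energy_dx[OF une[OF t] fd[OF pos[OF t]] ane])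
    show "(\<lambda>y. energy f y (deriv \<delta> t)) differentiable at (\<delta> t)"
      using Qd real_differentiable_def by blast
    have Q: "deriv (\<lambda>y. energy f y (deriv \<delta> t)) (\<delta> t) = -(c^2) * \<sigma> * deriv f (\<delta> t) / a t"
    proof -
      have "deriv (\<lambda>y. energy f y (deriv \<delta> t)) (\<delta> t) = (-((c * a t)^2) * \<sigma> * deriv f (\<delta> t) / (a t)^3)"
        using DERIV_imp_deriv[OF Qd] u[OF t] sgnu[OF t] by (simp add: a_def)
      also have "\<dots> = -(c^2) * \<sigma> * deriv f (\<delta> t) / a t"
        using apos[OF t] by (simp add: field_simps power2_eq_square power3_eq_cube)
      finally show ?thesis .
    qed
    have ad: "(a has_real_derivative \<sigma> * (deriv f (\<delta> t) * (c * a t))) (at t)"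
      unfolding a_def
      by (rule DERIV_add[OF DERIV_const DERIV_cmult[OF DERIV_chain2[OF fd[OF pos[OF t]] ode[OF t]]], of 1, simplified])
    have d1: "((\<lambda>s. c / a s) has_real_derivative (0 * a t - c * (\<sigma> * (deriv f (\<delta> t) * (c * a t)))) / (a t * a t)) (at t)"
      by (rule DERIV_divide[OF DERIV_const ad]) (use apos[OF t] in simp)
    have eq: "(0 * a t - c * (\<sigma> * (deriv f (\<delta> t) * (c * a t)))) / (a t * a t) = -(c^2) * \<sigma> * deriv f (\<delta> t) / a t"
      using apos[OF t] by (simp add: field_simps power2_eq_square)
    have ev: "eventually (\<lambda>s. deriv (\<lambda>w. energy f (\<delta> s) w) (deriv \<delta> s) = c / a s) (nhds t)"
    proof -
      have "open J" using J by (simp add: open_interval_def)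
      then have "eventually (\<lambda>s. s \<in> J) (nhds t)" using t by (intro eventually_nhds_in_open)
      then show ?thesis by eventually_elim (rule P)
    qed
    show "((\<lambda>s. deriv (\<lambda>w. energy f (\<delta> s) w) (deriv \<delta> s)) has_real_derivative
            deriv (\<lambda>y. energy f y (deriv \<delta> t)) (\<delta> t)) (at t)"
      using DERIV_cong_ev[OF refl ev refl] d1 eq Q by simp
  qed
qed

lemma geodesic_ode:
  fixes f \<gamma> :: "real \<Rightarrow> real"
  assumes fd: "\<And>x. x > 0 \<Longrightarrow> (f has_real_derivative deriv f x) (at x)"
    and bound: "\<And>x. x > 0 \<Longrightarrow> \<bar>f x\<bar> < 1"
    and G: "randers_geodesic f J \<gamma>" and nc: "\<not> (\<exists>c. \<forall>t\<in>J. \<gamma> t = c)"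
  shows "\<exists>\<sigma> c. (\<sigma> = 1 \<or> \<sigma> = -1) \<and> \<sigma> * c > 0 \<and>
           (\<forall>t\<in>J. (\<gamma> has_real_derivative c * (1 + \<sigma> * f (\<gamma> t))) (at t))"
proof -
  have J: "open_interval J" and pos: "\<And>t. t \<in> J \<Longrightarrow> \<gamma> t > 0" using G by (auto simp: randers_geodesic_def)
  have H: "\<forall>t\<in>J. \<gamma> differentiable (at t) \<and> deriv \<gamma> t \<noteq> 0 \<and>
         (\<lambda>w. energy f (\<gamma> t) w) differentiable (at (deriv \<gamma> t)) \<and>
         (\<lambda>y. energy f y (deriv \<gamma> t)) differentiable (at (\<gamma> t)) \<and>
         ((\<lambda>s. deriv (\<lambda>w. energy f (\<gamma> s) w) (deriv \<gamma> s))
            has_real_derivative deriv (\<lambda>y. energy f y (deriv \<gamma> t)) (\<gamma> t)) (at t)"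
    using G nc by (auto simp: randers_geodesic_def)
  define u where "u = deriv \<gamma>"
  define P where "P s = deriv (\<lambda>w. energy f (\<gamma> s) w) (u s)" for s
  define Q where "Q t = deriv (\<lambda>y. energy f y (u t)) (\<gamma> t)" for t
  have ud: "(\<gamma> has_real_derivative u t) (at t)" if "t \<in> J" for t
    using H that by (simp add: u_def DERIV_deriv_iff_real_differentiable)
  have une: "u t \<noteq> 0" if "t \<in> J" for t using H that by (simp add: u_def)
  have Pd: "(P has_real_derivative Q t) (at t)" if "t \<in> J" for t
    using H that unfolding P_def Q_def u_def by blast
  have Pc: "continuous_on J P"
    using Pd DERIV_isCont by (blast intro: continuous_at_imp_continuous_on)
  have sgn1: "sgn (u s) = 1 \<or> sgn (u s) = -1" if "s \<in> J" for s using une[OF that] by (auto simp: sgn_if)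
  have apos: "1 + sgn (u s) * f (\<gamma> s) > 0" if "s \<in> J" for s
    using bound[OF pos[OF that]] sgn1[OF that] by (auto simp: abs_less_iff)
  have Pf: "P s = u s / (1 + sgn (u s) * f (\<gamma> s))^2" if "s \<in> J" for s
    unfolding P_def by (rule DERIV_imp_deriv[OF energy_dv[OF une[OF that]]])
  have sgnP: "sgn (P s) = sgn (u s)" if "s \<in> J" for s
    using Pf[OF that] apos[OF that] by (simp add: sgn_divide power_sgn)
  obtain t0 where t0: "t0 \<in> J" using J by (auto simp: open_interval_def)
  define \<sigma> where "\<sigma> = sgn (u t0)"
  have same: "sgn (u s) = \<sigma>" if s: "s \<in> J" for s
  proof (rule ccontr)
    assume ne: "sgn (u s) \<noteq> \<sigma>"
    have "P s * P t0 < 0"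
    proof -
      have "sgn (P s) * sgn (P t0) = -1"
        using sgnP[OF s] sgnP[OF t0] sgn1[OF s] sgn1[OF t0] ne unfolding \<sigma>_def by auto
      then show ?thesis by (auto simp: sgn_if mult_less_0_iff split: if_splits)
    qed
    have conn: "connected (P ` J)"
      using connected_continuous_image[OF Pc] J is_interval_connected_1
      by (auto simp: open_interval_def)
    then have ii: "is_interval (P ` J)" using is_interval_connected_1 by blast
    have "0 \<in> P ` J"
    proof (cases "P s < 0")
      case True
      then have "P t0 > 0" using \<open>P s * P t0 < 0\<close> by (auto simp: mult_less_0_iff)
      then show ?thesis using ii True s t0 unfolding is_interval_1 by (meson imageI less_imp_le)
    next
      case False
      then have "P s > 0" "P t0 < 0" using \<open>P s * P t0 < 0\<close> by (auto simp: mult_less_0_iff)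
      then show ?thesis using ii s t0 unfolding is_interval_1 by (meson imageI less_imp_le)
    qed
    then obtain s' where "s' \<in> J" "P s' = 0" by auto
    then show False using sgnP[of s'] une[of s'] by (auto simp: sgn_0_0)
  qed
  have \<sigma>1: "\<sigma> = 1 \<or> \<sigma> = -1" using sgn1[OF t0] by (simp add: \<sigma>_def)
  define h where "h s = 1 + \<sigma> * f (\<gamma> s)" for s
  have hpos: "h s > 0" if "s \<in> J" for s using apos[OF that] same[OF that] by (simp add: h_def)
  have Pf2: "P s = u s / (h s)^2" if "s \<in> J" for s using Pf[OF that] same[OF that] by (simp add: h_def)
  have Qf: "Q t = -((u t)^2) * \<sigma> * deriv f (\<gamma> t) / (h t)^3" if t: "t \<in> J" for t
  proof -
    have ane: "1 + sgn (u t) * f (\<gamma> t) \<noteq> 0" using apos[OF t] by simp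
    show ?thesis unfolding Q_def using DERIV_imp_deriv[OF energy_dx[OF une[OF t] fd[OF pos[OF t]] ane]] same[OF t]
      by (simp add: h_def)
  qed
  have hd: "(h has_real_derivative \<sigma> * (deriv f (\<gamma> t) * u t)) (at t)" if t: "t \<in> J" for t
    unfolding h_def
    by (rule DERIV_add[OF DERIV_const DERIV_cmult[OF DERIV_chain2[OF fd[OF pos[OF t]] ud[OF t]]], of 1, simplified])
  have qd: "((\<lambda>s. P s * h s) has_real_derivative 0) (at t within J)" if t: "t \<in> J" for t
  proof -
    have d: "((\<lambda>s. P s * h s) has_real_derivative Q t * h t + (\<sigma> * (deriv f (\<gamma> t) * u t)) * P t) (at t)"
      by (rule DERIV_mult[OF Pd[OF t] hd[OF t]])
    have "Q t * h t + (\<sigma> * (deriv f (\<gamma> t) * u t)) * P t = 0"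
      using hpos[OF t] unfolding Qf[OF t] Pf2[OF t] by (simp add: field_simps power2_eq_square power3_eq_cube)
    then show ?thesis using d by (simp add: has_field_derivative_at_within)
  qed
  have cvx: "convex J" using J by (simp add: open_interval_def is_interval_convex)
  obtain c where c: "\<And>s. s \<in> J \<Longrightarrow> P s * h s = c"
    using has_field_derivative_zero_constant[OF cvx qd] by blast
  have uc: "u s = c * h s" if s: "s \<in> J" for s
  proof -
    have "c = u s / h s" using c[OF s] Pf2[OF s] hpos[OF s] by (simp add: power2_eq_square)
    then show ?thesis using hpos[OF s] by simp
  qed
  have cpos: "\<sigma> * c > 0"
  proof -
    have "c = u t0 / h t0" using uc[OF t0] hpos[OF t0] by simp
    moreover have "\<sigma> * u t0 > 0" using une[OF t0] by (auto simp: \<sigma>_def sgn_if)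
    ultimately show ?thesis using hpos[OF t0] by simp
  qed
  show ?thesis
    using \<sigma>1 cpos ud uc by (intro exI[of _ \<sigma>] exI[of _ c]) (auto simp: h_def)
qed

lemma low_blocks:
  fixes F g :: "real \<Rightarrow> real" and x :: "nat \<Rightarrow> real"
  assumes Fd: "\<And>y. y > 0 \<Longrightarrow> (F has_real_derivative g y) (at y)"
    and gpos: "\<And>y. y > 0 \<Longrightarrow> g y > 0"
    and xs: "\<And>k. x k > 0"
    and blocks: "\<And>k. \<exists>lo. lo > 0 \<and> x (Suc k) \<le> lo \<and> 2*lo \<le> x k \<and> (\<forall>z\<in>{lo..2*lo}. g z = 1/lo)"
  shows "\<exists>y>0. F y < r"
proof -
  have mono: "F a \<le> F b" if "0 < a" "a \<le> b" for a b
  proof (rule DERIV_nonneg_imp_nondecreasing[OF that(2)])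
    fix z assume "a \<le> z" "z \<le> b"
    then have "z > 0" using that by auto
    then show "\<exists>y. (F has_real_derivative y) (at z) \<and> 0 \<le> y"
      using Fd[of z] gpos[of z] by (intro exI[of _ "g z"]) auto
  qed
  have step: "F (x (Suc k)) \<le> F (x k) - 1" for k
  proof -
    obtain lo where lo: "lo > 0" "x (Suc k) \<le> lo" "2*lo \<le> x k" "\<forall>z\<in>{lo..2*lo}. g z = 1/lo"
      using blocks[of k] by blast
    obtain z where z: "lo < z" "z < 2*lo" "F (2*lo) - F lo = (2*lo - lo) * g z"
    proof -
      have "\<exists>z. lo < z \<and> z < 2*lo \<and> F (2*lo) - F lo = (2*lo - lo) * g z"
      proof (rule MVT2)
        show "lo < 2*lo" using lo by simp
        fix y assume "lo \<le> y" "y \<le> 2*lo"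
        then have "y > 0" using lo by simp
        then show "(F has_real_derivative g y) (at y)" by (rule Fd)
      qed
      then show ?thesis using that by blast
    qed
    have "F (2*lo) - F lo = 1" using z lo by simp
    moreover have "F (x (Suc k)) \<le> F lo" using mono[OF xs lo(2)] .
    moreover have "F (2*lo) \<le> F (x k)" using mono[OF _ lo(3)] lo by simp
    ultimately show ?thesis by linarith
  qed
  have ind: "F (x k) \<le> F (x 0) - real k" for k
  proof (induction k)
    case (Suc k) then show ?case using step[of k] by simp
  qed simp
  obtain k :: nat where "F (x 0) - r < real k" using reals_Archimedean2 by blast
  then show ?thesis using ind[of k] xs[of k] by (intro exI[of _ "x k"]) auto
qed

lemma extend:
  fixes f \<gamma> F :: "real \<Rightarrow> real"
  assumes fd: "\<And>x. x > 0 \<Longrightarrow> (f has_real_derivative deriv f x) (at x)"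
    and bound: "\<And>x. x > 0 \<Longrightarrow> \<bar>f x\<bar> < 1"
    and \<sigma>: "\<sigma> = 1 \<or> \<sigma> = -1" and c: "\<sigma> * c > 0"
    and Fd: "\<And>x. x > 0 \<Longrightarrow> (F has_real_derivative 1 / (1 + \<sigma> * f x)) (at x)"
    and low: "\<And>r. \<exists>x>0. F x < r"
    and J: "open_interval J" and pos: "\<And>t. t \<in> J \<Longrightarrow> \<gamma> t > 0"
    and ode: "\<And>t. t \<in> J \<Longrightarrow> (\<gamma> has_real_derivative c * (1 + \<sigma> * f (\<gamma> t))) (at t)"
  shows "\<exists>\<delta>. randers_geodesic f UNIV \<delta> \<and> (\<forall>t\<in>J. \<delta> t = \<gamma> t)"
proof -
  define g where "g x = 1 / (1 + \<sigma> * f x)" for x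
  have a: "0 < 1 + \<sigma> * f x" "1 + \<sigma> * f x < 2" if "x > 0" for x
    using bound[OF that] \<sigma> by (auto simp: abs_less_iff)
  have gpos: "g x > 1/2" if "x > 0" for x
    using a[OF that] by (simp add: g_def field_simps)
  obtain G where G: "\<And>t. G t > 0 \<and> F (G t) = t \<and> (G has_real_derivative inverse (g (G t))) (at t)"
    and GF: "\<And>x. x > 0 \<Longrightarrow> G (F x) = x"
    using global_inverse[of F g] Fd gpos low unfolding g_def by blast
  have zd: "((\<lambda>t. F (\<gamma> t) - c * t) has_real_derivative 0) (at t within J)" if t: "t \<in> J" for t
  proof -
    have D: "((\<lambda>t. F (\<gamma> t) - c * t) has_real_derivative g (\<gamma> t) * (c * (1 + \<sigma> * f (\<gamma> t))) - c * 1) (at t)"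
      by (rule DERIV_diff[OF DERIV_chain2[OF Fd[OF pos[OF t], folded g_def] ode[OF t]] DERIV_cmult[OF DERIV_ident]])
    have eq: "g (\<gamma> t) * (c * (1 + \<sigma> * f (\<gamma> t))) - c * 1 = 0"
      using a[OF pos[OF t]] by (simp add: g_def)
    show ?thesis using has_field_derivative_at_within[OF D[unfolded eq]] .
  qed
  have cvx: "convex J" using J by (simp add: open_interval_def is_interval_convex)
  obtain d where d: "\<And>t. t \<in> J \<Longrightarrow> F (\<gamma> t) - c * t = d"
    using has_field_derivative_zero_constant[OF cvx zd] by blast
  define \<delta> where "\<delta> t = G (c * t + d)" for t
  have agree: "\<delta> t = \<gamma> t" if t: "t \<in> J" for t
  proof -
    have "c * t + d = F (\<gamma> t)" using d[OF t] by simp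
    then show ?thesis using GF[OF pos[OF t]] by (simp add: \<delta>_def)
  qed
  have dpos: "\<delta> t > 0" for t using G by (simp add: \<delta>_def)
  have dode: "(\<delta> has_real_derivative c * (1 + \<sigma> * f (\<delta> t))) (at t)" for t
  proof -
    have inner: "((\<lambda>t. c * t + d) has_real_derivative c * 1 + 0) (at t)"
      by (rule DERIV_add[OF DERIV_cmult[OF DERIV_ident] DERIV_const])
    have D: "(\<delta> has_real_derivative inverse (g (G (c * t + d))) * (c * 1 + 0)) (at t)"
      unfolding \<delta>_def by (rule DERIV_chain2[OF conjunct2[OF conjunct2[OF G]] inner])
    have eq: "inverse (g (G (c * t + d))) * (c * 1 + 0) = c * (1 + \<sigma> * f (\<delta> t))"
      using a[OF dpos[of t]] by (simp add: g_def \<delta>_def)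
    show ?thesis using D[unfolded eq] .
  qed
  have "randers_geodesic f UNIV \<delta>"
    by (rule ode_geodesic[OF fd bound \<sigma> c _ dpos dode]) (auto simp: open_interval_def)
  then show ?thesis using agree by blast
qed

theorem mainTheorem5:
  fixes f :: "real \<Rightarrow> real"
  assumes smooth: "smooth_on_real {0<..} f"
    and bound: "\<forall>x>0. \<bar>f x\<bar> < 1"
    and on_I4k: "\<forall>k::nat. \<forall>x \<in> {(1/2) ^ (4*k+1) .. (1/2) ^ (4*k)}.
                   f x = (1/2::real) ^ (4*k+1) - 1"
    and on_I4k2: "\<forall>k::nat. \<forall>x \<in> {(1/2) ^ (4*k+3) .. (1/2) ^ (4*k+2)}.
                   f x = 1 - (1/2::real) ^ (4*k+3)"
  shows "forward_complete f \<and> backward_complete f \<and> \<not> complete {0::real<..}"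
proof -
  have bd: "\<And>x. x > 0 \<Longrightarrow> \<bar>f x\<bar> < 1" using bound by blast
  have fd: "(f has_real_derivative deriv f x) (at x)" if "x > 0" for x
  proof -
    have "((deriv ^^ 0) f) differentiable (at x)" using smooth that unfolding smooth_on_real_def by blast
    then show ?thesis by (simp add: DERIV_deriv_iff_real_differentiable)
  qed
  have fc: "continuous_on {0<..} f"
    using fd DERIV_isCont by (blast intro: continuous_at_imp_continuous_on)
  have primF: "\<exists>F. \<forall>x>0. (F has_real_derivative 1 / (1 + \<sigma> * f x)) (at x)" if \<sigma>: "\<sigma> = 1 \<or> \<sigma> = -1" for \<sigma>
  proof (rule prim)
    have "1 + \<sigma> * f x \<noteq> 0" if "x > 0" for x using bd[OF that] \<sigma> by (auto simp: abs_less_iff)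
    then have "\<forall>x\<in>{0<..}. 1 + \<sigma> * f x \<noteq> 0" by simp
    then show "continuous_on {0<..} (\<lambda>x. 1 / (1 + \<sigma> * f x))"
      by (intro continuous_on_divide continuous_on_add continuous_on_mult continuous_on_const fc)
  qed
  have gpos: "1 / (1 + \<sigma> * f y) > 0" if "y > 0" "\<sigma> = 1 \<or> \<sigma> = -1" for y \<sigma>
    using bd[OF that(1)] that(2) by (auto simp: abs_less_iff)
  have lowF: "\<exists>F. (\<forall>x>0. (F has_real_derivative 1 / (1 + \<sigma> * f x)) (at x)) \<and> (\<forall>r. \<exists>y>0. F y < r)"
    if \<sigma>: "\<sigma> = 1 \<or> \<sigma> = -1" for \<sigma>
  proof -
    obtain F where Fd: "\<forall>x>0. (F has_real_derivative 1 / (1 + \<sigma> * f x)) (at x)" using primF[OF \<sigma>] by blast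
    have "\<exists>y>0. F y < r" for r
      using \<sigma>
    proof
      assume s: "\<sigma> = 1"
      show ?thesis
      proof (rule low_blocks[where x="\<lambda>k. (1/2)^(4*k)"])
        show "\<And>y. y > 0 \<Longrightarrow> (F has_real_derivative 1 / (1 + \<sigma> * f y)) (at y)" using Fd by blast
        show "\<And>y. y > 0 \<Longrightarrow> 1 / (1 + \<sigma> * f y) > 0" using gpos \<sigma> by blast
        show "\<And>k. (1/2::real)^(4*k) > 0" by simp
        fix k :: nat
        define lo :: real where "lo = (1/2)^(4*k+1)"
        have e2: "2 * lo = (1/2)^(4*k)" by (simp add: lo_def)
        have "(1/2::real)^(4 * Suc k) \<le> lo" unfolding lo_def by (rule power_decreasing) auto
        moreover have "\<forall>z\<in>{lo..2*lo}. 1 / (1 + \<sigma> * f z) = 1/lo"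
        proof
          fix z assume z: "z \<in> {lo..2*lo}"
          then have z1: "lo \<le> z" "z \<le> 2*lo" by auto
          then have "(1/2)^(4*k+1) \<le> z" "z \<le> (1/2::real)^(4*k)" using e2 unfolding lo_def by linarith+
          then have "f z = lo - 1" using on_I4k unfolding lo_def by auto
          then show "1 / (1 + \<sigma> * f z) = 1/lo" using s by simp
        qed
        moreover have "lo > 0" by (simp add: lo_def)
        ultimately show "\<exists>lo. lo > 0 \<and> (1/2)^(4 * Suc k) \<le> lo \<and> 2*lo \<le> (1/2::real)^(4*k) \<and> (\<forall>z\<in>{lo..2*lo}. 1 / (1 + \<sigma> * f z) = 1/lo)"
          using e2 by (intro exI[of _ lo]) auto
      qed
    next
      assume s: "\<sigma> = -1"
      show ?thesis
      proof (rule low_blocks[where x="\<lambda>k. (1/2)^(4*k+2)"])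
        show "\<And>y. y > 0 \<Longrightarrow> (F has_real_derivative 1 / (1 + \<sigma> * f y)) (at y)" using Fd by blast
        show "\<And>y. y > 0 \<Longrightarrow> 1 / (1 + \<sigma> * f y) > 0" using gpos \<sigma> by blast
        show "\<And>k. (1/2::real)^(4*k+2) > 0" by simp
        fix k :: nat
        define lo :: real where "lo = (1/2)^(4*k+3)"
        have e2: "2 * lo = (1/2)^(4*k+2)" by (simp add: lo_def power_add power_divide)
        have "(1/2::real)^(4 * Suc k + 2) \<le> lo" unfolding lo_def by (rule power_decreasing) auto
        moreover have "\<forall>z\<in>{lo..2*lo}. 1 / (1 + \<sigma> * f z) = 1/lo"
        proof
          fix z assume z: "z \<in> {lo..2*lo}"
          then have z1: "lo \<le> z" "z \<le> 2*lo" by auto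
          then have "(1/2)^(4*k+3) \<le> z" "z \<le> (1/2::real)^(4*k+2)" using e2 unfolding lo_def by linarith+
          then have "f z = 1 - lo" using on_I4k2 unfolding lo_def by auto
          then show "1 / (1 + \<sigma> * f z) = 1/lo" using s by simp
        qed
        moreover have "lo > 0" by (simp add: lo_def)
        ultimately show "\<exists>lo. lo > 0 \<and> (1/2)^(4 * Suc k + 2) \<le> lo \<and> 2*lo \<le> (1/2::real)^(4*k+2) \<and> (\<forall>z\<in>{lo..2*lo}. 1 / (1 + \<sigma> * f z) = 1/lo)"
          using e2 by (intro exI[of _ lo]) auto
      qed
    qed
    then show ?thesis using Fd by blast
  qed
  have univ: "J = UNIV" if inex: "inextendible_geodesic f J \<gamma>" for J \<gamma>
  proof (rule ccontr)
    assume ne: "J \<noteq> UNIV"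
    then have sub: "J \<subset> UNIV" by auto
    have geo: "randers_geodesic f J \<gamma>" and noext: "\<not> (\<exists>J' \<delta>. J \<subset> J' \<and> randers_geodesic f J' \<delta> \<and> (\<forall>t\<in>J. \<delta> t = \<gamma> t))"
      using inex by (auto simp: inextendible_geodesic_def)
    have J: "open_interval J" and pos: "\<And>t. t \<in> J \<Longrightarrow> \<gamma> t > 0" using geo by (auto simp: randers_geodesic_def)
    show False
    proof (cases "\<exists>c. \<forall>t\<in>J. \<gamma> t = c")
      case True
      then obtain c where c: "\<And>t. t \<in> J \<Longrightarrow> \<gamma> t = c" by blast
      obtain t0 where t0: "t0 \<in> J" using J by (auto simp: open_interval_def)
      have cpos: "c > 0" using pos[OF t0] c[OF t0] by simp
      have "randers_geodesic f UNIV (\<lambda>_. c)"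
        unfolding randers_geodesic_def open_interval_def using cpos by auto
      then show False using noext sub c by blast
    next
      case False
      obtain \<sigma> c where \<sigma>: "\<sigma> = 1 \<or> \<sigma> = -1" and c: "\<sigma> * c > 0"
        and ode: "\<forall>t\<in>J. (\<gamma> has_real_derivative c * (1 + \<sigma> * f (\<gamma> t))) (at t)"
        using geodesic_ode[OF fd bd geo False] by blast
      obtain F where Fd: "\<forall>x>0. (F has_real_derivative 1 / (1 + \<sigma> * f x)) (at x)"
        and low: "\<forall>r. \<exists>y>0. F y < r" using lowF[OF \<sigma>] by blast
      have "\<exists>\<delta>. randers_geodesic f UNIV \<delta> \<and> (\<forall>t\<in>J. \<delta> t = \<gamma> t)"
      proof (rule extend[where F=F and \<sigma>=\<sigma> and c=c])
        show "\<And>x. 0 < x \<Longrightarrow> (f has_real_derivative deriv f x) (at x)" by (rule fd)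
        show "\<And>x. 0 < x \<Longrightarrow> \<bar>f x\<bar> < 1" by (rule bd)
      qed (use \<sigma> c Fd low J pos ode in auto)
      then obtain \<delta> where "randers_geodesic f UNIV \<delta>" "\<forall>t\<in>J. \<delta> t = \<gamma> t" by blast
      then show False using noext sub by blast
    qed
  qed
  have "forward_complete f" unfolding forward_complete_def
    using univ by (metis UNIV_I gt_ex)
  moreover have "backward_complete f" unfolding backward_complete_def
    using univ by (metis UNIV_I lt_ex)
  moreover have "\<not> complete {0::real<..}"
  proof
    assume "complete {0::real<..}"
    then have "closed {0::real<..}" using complete_eq_closed by blast
    then have "closure {0::real<..} = {0<..}" by (rule closure_closed)
    then have "{0::real..} = {0<..}" using closure_greaterThan[of "0::real"] by simp
    moreover have "(0::real) \<in> {0..}" by simp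
    ultimately show False by simp
  qed
  ultimately show ?thesis by blast
qed

end
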